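(* Let $\mathcal{D}$ be a distribution on $\mathcal{X}$, $X\sim\mathcal{D}^n$, and $\sigma>0$. Let $\mathcal{Q}_\sigma$ be the class of functions $\phi:\mathcal{X}^n\to\mathbb{R}$ such that $\phi(X)-\phi(\mathcal{D}^n)$ is $\sigma$-subgaussian, where $\phi(\mathcal{D}^n)=\mathbb{E}_{X'\sim\mathcal{D}^n}[\phi(X')]$. If $\mathcal{M}:\mathcal{X}^n\to\mathcal{Q}_\sigma$ is a randomized mapping with $I(\mathcal{M}(X);X)\le B$, then $$\mathbb{E}_{X\sim\mathcal{D}^n,\ \phi\leftarrow\mathcal{M}(X)}\left[(\phi(X)-\phi(\mathcal{D}^n))^2\right]\le\sigma^2\cdot\inf_{\lambda\in(0,1)}\left(\frac{2B-\ln(1-\lambda)}{\lambda}\right).$$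
   Context: A real random variable $Y$ is $\sigma$-subgaussian if $\mathbb{E}[e^{tY}]\le e^{t^2\sigma^2/2}$ for all $t\in\mathbb{R}$. $I(\cdot;\cdot)$ denotes mutual information measured in nats. *)

theory Defs
  imports "HOL-Probability.Probability"
begin

definition subgaussian :: "'b measure \<Rightarrow> real \<Rightarrow> ('b \<Rightarrow> real) \<Rightarrow> bool" where
  "subgaussian P \<sigma> Y \<longleftrightarrow> Y \<in> borel_measurable P \<and>
     (\<forall>t::real. (\<integral>\<^sup>+ x. ennreal (exp (t * Y x)) \<partial>P) \<le> ennreal (exp (t\<^sup>2 * \<sigma>\<^sup>2 / 2)))"

definition query_class :: "'b measure \<Rightarrow> real \<Rightarrow> ('b \<Rightarrow> real) set" where
  "query_class Xn \<sigma> = {\<phi>. integrable Xn \<phi> \<and>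
       subgaussian Xn \<sigma> (\<lambda>x. \<phi> x - (\<integral>x'. \<phi> x' \<partial>Xn))}"

definition joint_law :: "'b measure \<Rightarrow> 'c measure \<Rightarrow> ('b \<Rightarrow> 'c measure) \<Rightarrow> ('b \<times> 'c) measure" where
  "joint_law Xn T M = Xn \<bind> (\<lambda>x. distr (M x) (Xn \<Otimes>\<^sub>M T) (\<lambda>\<phi>. (x, \<phi>)))"

text \<open>"I(fst;snd) <= B" (in nats) for a joint law J on S x T: the mutual information is
  finite (joint law absolutely continuous w.r.t. product of marginals, log density
  integrable) and the library's mutual information with base e is at most B.\<close>
definition mutual_info_le :: "('b \<times> 'c) measure \<Rightarrow> 'b measure \<Rightarrow> 'c measure \<Rightarrow> real \<Rightarrow> bool" where
  "mutual_info_le J S T B \<longleftrightarrow>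
     (let Q = distr J S fst \<Otimes>\<^sub>M distr J T snd in
        absolutely_continuous Q J \<and> integrable J (entropy_density (exp 1) Q J) \<and>
        prob_space.mutual_information J (exp 1) S T fst snd \<le> B)"

end

theory Submission
  imports Defs
begin

lemma nn_normal_density_1:
  assumes "0 < s"
  shows "(\<integral>\<^sup>+x. ennreal (normal_density m s x) \<partial>lborel) = 1"
  using assms by (subst nn_integral_eq_integral) auto

lemma gauss_mgf:
  "(\<integral>\<^sup>+g. ennreal (std_normal_density g * exp (a * g)) \<partial>lborel) = ennreal (exp (a\<^sup>2 / 2))"
proof -
  have eq: "std_normal_density g * exp (a * g) = exp (a\<^sup>2 / 2) * normal_density a 1 g" for g
  proof -
    have "exp (- g\<^sup>2 / 2) * exp (a * g) = exp (a\<^sup>2 / 2) * exp (- (g - a)\<^sup>2 / 2)"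
      by (simp add: exp_add[symmetric] power2_eq_square algebra_simps add_divide_distrib diff_divide_distrib)
    then show ?thesis unfolding std_normal_density_def normal_density_def by simp
  qed
  have "(\<integral>\<^sup>+g. ennreal (std_normal_density g * exp (a * g)) \<partial>lborel)
      = (\<integral>\<^sup>+g. ennreal (exp (a\<^sup>2 / 2)) * ennreal (normal_density a 1 g) \<partial>lborel)"
    by (simp add: eq ennreal_mult)
  also have "\<dots> = ennreal (exp (a\<^sup>2 / 2)) * (\<integral>\<^sup>+g. ennreal (normal_density a 1 g) \<partial>lborel)"
    by (rule nn_integral_cmult) simp
  finally show ?thesis using nn_normal_density_1[of 1 a] by simp
qed

lemma gauss_sq:
  assumes "0 \<le> l" "l < 1"
  shows "(\<integral>\<^sup>+g. ennreal (std_normal_density g * exp (l * g\<^sup>2 / 2)) \<partial>lborel) = ennreal (1 / sqrt (1 - l))"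
proof -
  define s where "s = 1 / sqrt (1 - l)"
  have s: "0 < s" using assms by (simp add: s_def)
  have s2: "s\<^sup>2 = 1 / (1 - l)" using assms by (simp add: s_def power_divide)
  have eq: "std_normal_density g * exp (l * g\<^sup>2 / 2) = s * normal_density 0 s g" for g
  proof -
    have e: "exp (- g\<^sup>2 / 2) * exp (l * g\<^sup>2 / 2) = exp (- g\<^sup>2 / (2 * s\<^sup>2))"
      using assms unfolding s2 by (simp add: exp_add[symmetric] field_simps)
    have "sqrt (2 * pi * s\<^sup>2) = sqrt (2 * pi) * s" using s by (simp add: real_sqrt_mult)
    then show ?thesis unfolding std_normal_density_def normal_density_def
      using s e[symmetric] by (simp add: field_simps)
  qed
  have "(\<integral>\<^sup>+g. ennreal (std_normal_density g * exp (l * g\<^sup>2 / 2)) \<partial>lborel)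
      = (\<integral>\<^sup>+g. ennreal s * ennreal (normal_density 0 s g) \<partial>lborel)"
    using s by (simp add: eq ennreal_mult)
  also have "\<dots> = ennreal s * (\<integral>\<^sup>+g. ennreal (normal_density 0 s g) \<partial>lborel)"
    by (rule nn_integral_cmult) simp
  finally show ?thesis using nn_normal_density_1[OF s, of 0] by (simp add: s_def)
qed


lemma subg_sq:
  assumes P: "prob_space P" and sg: "subgaussian P \<sigma> Y" and "0 < \<sigma>" "0 \<le> l" "l < 1"
  shows "(\<integral>\<^sup>+x. ennreal (exp (l * (Y x)\<^sup>2 / (2 * \<sigma>\<^sup>2))) \<partial>P) \<le> ennreal (1 / sqrt (1 - l))"
proof -
  interpret P: prob_space P by fact
  interpret pair_sigma_finite P lborel by unfold_locales
  have Y[measurable]: "Y \<in> borel_measurable P" and mgf: "\<And>t. (\<integral>\<^sup>+ x. ennreal (exp (t * Y x)) \<partial>P) \<le> ennreal (exp (t\<^sup>2 * \<sigma>\<^sup>2 / 2))"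
    using sg unfolding subgaussian_def by auto
  define k where "k = sqrt l / \<sigma>"
  have k2: "k\<^sup>2 = l / \<sigma>\<^sup>2" using assms by (simp add: k_def power_divide)
  have "(\<integral>\<^sup>+x. ennreal (exp (l * (Y x)\<^sup>2 / (2 * \<sigma>\<^sup>2))) \<partial>P)
      = (\<integral>\<^sup>+x. (\<integral>\<^sup>+g. ennreal (std_normal_density g * exp ((k * Y x) * g)) \<partial>lborel) \<partial>P)"
  proof (rule nn_integral_cong)
    fix x
    have "l * (Y x)\<^sup>2 / (2 * \<sigma>\<^sup>2) = (k * Y x)\<^sup>2 / 2" using assms
      by (simp add: power_mult_distrib k2)
    then show "ennreal (exp (l * (Y x)\<^sup>2 / (2 * \<sigma>\<^sup>2))) = (\<integral>\<^sup>+g. ennreal (std_normal_density g * exp ((k * Y x) * g)) \<partial>lborel)"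
      by (simp add: gauss_mgf)
  qed
  also have "\<dots> = (\<integral>\<^sup>+g. (\<integral>\<^sup>+x. ennreal (std_normal_density g * exp ((k * Y x) * g)) \<partial>P) \<partial>lborel)"
    by (rule Fubini'[symmetric]) measurable
  also have "\<dots> = (\<integral>\<^sup>+g. ennreal (std_normal_density g) * (\<integral>\<^sup>+x. ennreal (exp ((k * g) * Y x)) \<partial>P) \<partial>lborel)"
    by (intro nn_integral_cong, subst nn_integral_cmult[symmetric])
       (auto simp: ennreal_mult mult_ac)
  also have "\<dots> \<le> (\<integral>\<^sup>+g. ennreal (std_normal_density g) * ennreal (exp ((k * g)\<^sup>2 * \<sigma>\<^sup>2 / 2)) \<partial>lborel)"
    by (intro nn_integral_mono mult_left_mono mgf) auto
  also have "\<dots> = (\<integral>\<^sup>+g. ennreal (std_normal_density g * exp (l * g\<^sup>2 / 2)) \<partial>lborel)"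
    using assms by (intro nn_integral_cong) (simp add: ennreal_mult power_mult_distrib k2)
  also have "\<dots> = ennreal (1 / sqrt (1 - l))" using assms by (simp add: gauss_sq)
  finally show ?thesis .
qed


lemma dv_bound:
  assumes Q: "prob_space Q" and J: "prob_space J" and sets: "sets J = sets Q"
    and ac: "absolutely_continuous Q J"
    and int: "integrable J (\<lambda>z. ln (enn2real (RN_deriv Q J z)))"
    and f[measurable]: "f \<in> borel_measurable Q" and fpos: "\<And>z. 0 \<le> f z"
    and Z: "(\<integral>\<^sup>+z. ennreal (exp (f z)) \<partial>Q) \<le> ennreal (exp c)"
  shows "(\<integral>\<^sup>+z. ennreal (f z) \<partial>J) \<le> ennreal ((\<integral>z. ln (enn2real (RN_deriv Q J z)) \<partial>J) + c)
     \<and> 0 \<le> (\<integral>z. ln (enn2real (RN_deriv Q J z)) \<partial>J) + c"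
proof -
  interpret Q: prob_space Q by fact
  interpret J: prob_space J by fact
  define p where "p = RN_deriv Q J"
  define lg where "lg z = ln (enn2real (p z))" for z
  define h where "h z = exp (f z - c - lg z)" for z
  define g where "g z = lg z + (c - 1) + h z" for z
  have hpos0: "0 \<le> h z" for z by (simp add: h_def)
  have mJ[measurable_cong]: "sets J = sets Q" by (rule sets)
  have [measurable]: "p \<in> borel_measurable Q" unfolding p_def by simp
  have [measurable]: "lg \<in> borel_measurable Q" "h \<in> borel_measurable Q" "g \<in> borel_measurable Q"
    unfolding lg_def h_def g_def by measurable
  have fg: "f z \<le> g z" for z
    using exp_ge_add_one_self[of "f z - c - lg z"] unfolding g_def h_def by linarith
  have fin: "AE z in Q. p z \<noteq> \<infinity>"
    unfolding p_def by (rule Q.RN_deriv_finite[OF _ ac sets]) (rule J.sigma_finite_measure_axioms)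
  have "(\<integral>\<^sup>+z. ennreal (h z) \<partial>J) = (\<integral>\<^sup>+z. p z * ennreal (h z) \<partial>Q)"
    unfolding p_def by (rule Q.RN_deriv_nn_integral[OF ac sets]) measurable
  also have "\<dots> \<le> (\<integral>\<^sup>+z. ennreal (exp (- c)) * ennreal (exp (f z)) \<partial>Q)"
  proof (rule nn_integral_mono_AE)
    show "AE z in Q. p z * ennreal (h z) \<le> ennreal (exp (- c)) * ennreal (exp (f z))"
      using fin
    proof eventually_elim
      case (elim z)
      then obtain r where r: "p z = ennreal r" "0 \<le> r" by (cases "p z") auto
      show ?case
      proof (cases "r = 0")
        case True then show ?thesis using r by simp
      next
        case False
        then have "r > 0" using r by simp
        then have "r * h z = exp (- c) * exp (f z)"
          using r by (simp add: h_def lg_def exp_diff exp_minus exp_add field_simps)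
        then show ?thesis using r \<open>r > 0\<close> by (simp add: ennreal_mult[symmetric] hpos0)
      qed
    qed
  qed
  also have "\<dots> = ennreal (exp (- c)) * (\<integral>\<^sup>+z. ennreal (exp (f z)) \<partial>Q)"
    by (rule nn_integral_cmult) measurable
  also have "\<dots> \<le> ennreal (exp (- c)) * ennreal (exp c)"
    by (intro mult_left_mono Z) auto
  also have "\<dots> = 1" by (simp add: ennreal_mult[symmetric] exp_minus)
  finally have hle: "(\<integral>\<^sup>+z. ennreal (h z) \<partial>J) \<le> 1" .
  have hpos: "0 \<le> h z" for z by (simp add: h_def)
  have hint: "integrable J h"
    by (rule integrableI_bounded) (use hle hpos in \<open>auto simp: top_unique less_top[symmetric]\<close>)
  have hI: "(\<integral>z. h z \<partial>J) \<le> 1"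
    using hle nn_integral_eq_integral[OF hint] hpos by simp
  have lint: "integrable J lg" using int unfolding lg_def p_def .
  have gint: "integrable J g" unfolding g_def[abs_def] using lint hint by simp
  have gI: "(\<integral>z. g z \<partial>J) = (\<integral>z. lg z \<partial>J) + (c - 1) + (\<integral>z. h z \<partial>J)"
    unfolding g_def[abs_def] using lint hint by (simp add: J.prob_space)
  have gpos: "0 \<le> g z" for z using fg[of z] fpos[of z] by simp
  have "(\<integral>\<^sup>+z. ennreal (f z) \<partial>J) \<le> (\<integral>\<^sup>+z. ennreal (g z) \<partial>J)"
    by (intro nn_integral_mono ennreal_leI fg)
  also have "\<dots> = ennreal (\<integral>z. g z \<partial>J)"
    by (rule nn_integral_eq_integral[OF gint]) (simp add: gpos)
  also have "\<dots> \<le> ennreal ((\<integral>z. lg z \<partial>J) + c)"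
    using hI gI by (intro ennreal_leI) simp
  finally have 1: "(\<integral>\<^sup>+z. ennreal (f z) \<partial>J) \<le> ennreal ((\<integral>z. lg z \<partial>J) + c)" .
  have "0 \<le> (\<integral>z. g z \<partial>J)" by (intro integral_nonneg_AE) (simp add: gpos)
  then have 2: "0 \<le> (\<integral>z. lg z \<partial>J) + c" using hI gI by simp
  show ?thesis using 1 2 unfolding lg_def p_def by simp
qed


theorem mainTheorem4:
  fixes D :: "'a measure" and n :: nat and \<sigma> B :: real
    and T :: "((nat \<Rightarrow> 'a) \<Rightarrow> real) measure"
    and M :: "(nat \<Rightarrow> 'a) \<Rightarrow> ((nat \<Rightarrow> 'a) \<Rightarrow> real) measure"
  defines "Xn \<equiv> PiM {..<n} (\<lambda>_. D)"
  assumes "prob_space D"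
    and "\<sigma> > 0"
    and "(\<lambda>(x, \<phi>). \<phi> x) \<in> borel_measurable (Xn \<Otimes>\<^sub>M T)"
    and "space T \<subseteq> query_class Xn \<sigma>"
    and "M \<in> measurable Xn (prob_algebra T)"
    and "mutual_info_le (joint_law Xn T M) Xn T B"
  shows "(\<integral>\<^sup>+ (x, \<phi>). ennreal ((\<phi> x - (\<integral>x'. \<phi> x' \<partial>Xn))\<^sup>2) \<partial>(joint_law Xn T M))
           \<le> ennreal (\<sigma>\<^sup>2 * (INF l\<in>{0<..<1::real}. (2 * B - ln (1 - l)) / l))"
proof -
  note Mm[measurable] = assms(6)
  have PX: "prob_space Xn" unfolding Xn_def by (rule prob_space_PiM) (use assms(2) in auto)
  interpret X: prob_space Xn by fact
  define K where "K x = distr (M x) (Xn \<Otimes>\<^sub>M T) (\<lambda>\<phi>. (x, \<phi>))" for x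
  have Km: "K \<in> Xn \<rightarrow>\<^sub>M prob_algebra (Xn \<Otimes>\<^sub>M T)"
    unfolding K_def by (rule measurable_distr_prob_space2[OF assms(6)]) simp
  define J where "J = joint_law Xn T M"
  have JK: "J = Xn \<bind> K" unfolding J_def joint_law_def K_def ..
  have Xsp: "Xn \<in> space (prob_algebra Xn)" by (simp add: space_prob_algebra PX)
  have PJ: "prob_space J" unfolding JK by (rule prob_space_bind'[OF Xsp Km])
  interpret J: prob_space J by fact
  have setsJ: "sets J = sets (Xn \<Otimes>\<^sub>M T)" unfolding JK by (rule sets_bind'[OF Xsp Km])
  have Mx: "x \<in> space Xn \<Longrightarrow> sets (M x) = sets T \<and> prob_space (M x)" for x
    using measurable_space[OF assms(6)] by (auto simp: space_prob_algebra)
  have marg: "distr J Xn fst = Xn"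
  proof -
    have "distr J Xn fst = Xn \<bind> (\<lambda>x. distr (K x) Xn fst)"
      unfolding JK by (rule distr_bind[OF measurable_prob_algebraD[OF Km] X.not_empty]) simp
    also have "\<dots> = Xn \<bind> return Xn"
    proof (rule bind_cong[OF refl])
      fix x assume x: "x \<in> space Xn"
      interpret Mx: prob_space "M x" using Mx[OF x] by simp
      have m1: "(\<lambda>\<phi>. (x, \<phi>)) \<in> M x \<rightarrow>\<^sub>M Xn \<Otimes>\<^sub>M T"
        by (subst measurable_cong_sets[OF conjunct1[OF Mx[OF x]] refl]) (rule measurable_Pair1'[OF x])
      have "distr (K x) Xn fst = distr (M x) Xn (fst \<circ> (\<lambda>\<phi>. (x, \<phi>)))"
        unfolding K_def by (rule distr_distr[OF measurable_fst m1])
      also have "\<dots> = distr (M x) Xn (\<lambda>_. x)" by (simp add: comp_def)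
      also have "\<dots> = return Xn x" using x by simp
      finally show "distr (K x) Xn fst = return Xn x" .
    qed
    also have "\<dots> = Xn" by (rule bind_return'') simp
    finally show ?thesis .
  qed
  define T' where "T' = distr J T snd"
  have sndm: "snd \<in> J \<rightarrow>\<^sub>M T" by (simp add: measurable_cong_sets[OF setsJ refl])
  have PT: "prob_space T'" unfolding T'_def by (rule J.prob_space_distr[OF sndm])
  interpret T': prob_space T' by fact
  interpret XT: pair_prob_space Xn T' by unfold_locales
  define Q where "Q = Xn \<Otimes>\<^sub>M T'"
  have PQ: "prob_space Q" unfolding Q_def by (rule prob_space_pair[OF PX PT])
  have setsQ: "sets Q = sets (Xn \<Otimes>\<^sub>M T)" unfolding Q_def T'_def
    by (rule sets_pair_measure_cong) auto
  have spT: "space T' = space T" unfolding T'_def by simp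
  have MI: "prob_space.mutual_information J (exp 1) Xn T fst snd = (\<integral>z. ln (enn2real (RN_deriv Q J z)) \<partial>J)"
  proof -
    have "distr J (Xn \<Otimes>\<^sub>M T) (\<lambda>x. (fst x, snd x)) = J"
      using distr_id2[of "Xn \<Otimes>\<^sub>M T" J] setsJ by simp
    then show ?thesis
      unfolding J.mutual_information_def KL_divergence_def entropy_density_def
      by (simp add: marg Q_def T'_def log_def comp_def)
  qed
  have mi_assm: "absolutely_continuous Q J" "integrable J (\<lambda>z. ln (enn2real (RN_deriv Q J z)))"
      "prob_space.mutual_information J (exp 1) Xn T fst snd \<le> B"
    using assms(7) unfolding mutual_info_le_def Let_def J_def[symmetric] marg T'_def[symmetric] Q_def[symmetric]
      entropy_density_def by (auto simp: log_def comp_def)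
  define m where "m \<phi> = (\<integral>x'. \<phi> x' \<partial>Xn)" for \<phi> :: "(nat \<Rightarrow> 'a) \<Rightarrow> real"
  have ev[measurable]: "(\<lambda>z. snd z (fst z)) \<in> borel_measurable (Xn \<Otimes>\<^sub>M T)"
    using assms(4) by (simp add: case_prod_beta)
  have "(\<lambda>(\<phi>, x). \<phi> x) \<in> borel_measurable (T \<Otimes>\<^sub>M Xn)"
    using assms(4) by (subst measurable_pair_swap_iff) simp
  then have mm[measurable]: "m \<in> borel_measurable T"
    unfolding m_def using X.borel_measurable_lebesgue_integral[of "\<lambda>\<phi> x. \<phi> x" T] by simp
  have bound: "(\<integral>\<^sup>+ (x, \<phi>). ennreal ((\<phi> x - (\<integral>x'. \<phi> x' \<partial>Xn))\<^sup>2) \<partial>J)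
           \<le> ennreal (\<sigma>\<^sup>2 * ((2 * B - ln (1 - l)) / l)) \<and> 0 \<le> (2 * B - ln (1 - l)) / l"
    if l: "0 < l" "l < 1" for l
  proof -
    define f where "f z = l * (snd z (fst z) - m (snd z))\<^sup>2 / (2 * \<sigma>\<^sup>2)" for z
    have fm: "f \<in> borel_measurable (Xn \<Otimes>\<^sub>M T)" unfolding f_def by measurable
    have fQ: "f \<in> borel_measurable Q" using fm by (simp add: measurable_cong_sets[OF setsQ refl])
    have fpos: "0 \<le> f z" for z using l by (simp add: f_def)
    define c where "c = - ln (1 - l) / 2"
    have sq: "sqrt (1 - l) = exp (ln (1 - l) / 2)"
      by (rule real_sqrt_unique) (use l in \<open>simp_all add: power2_eq_square exp_add[symmetric]\<close>)
    have ec: "exp c = 1 / sqrt (1 - l)" unfolding sq c_def by (simp add: exp_minus field_simps)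
    have "(\<integral>\<^sup>+z. ennreal (exp (f z)) \<partial>Q) = (\<integral>\<^sup>+\<phi>. (\<integral>\<^sup>+x. ennreal (exp (f (x, \<phi>))) \<partial>Xn) \<partial>T')"
      unfolding Q_def using fm
      by (intro XT.nn_integral_snd[symmetric]) (simp add: measurable_cong_sets[OF setsQ[unfolded Q_def] refl])
    also have "\<dots> \<le> (\<integral>\<^sup>+\<phi>. ennreal (1 / sqrt (1 - l)) \<partial>T')"
    proof (rule nn_integral_mono)
      fix \<phi> assume "\<phi> \<in> space T'"
      then have "\<phi> \<in> query_class Xn \<sigma>" using assms(5) spT by auto
      then have sg: "subgaussian Xn \<sigma> (\<lambda>x. \<phi> x - m \<phi>)" unfolding query_class_def m_def by simp
      show "(\<integral>\<^sup>+x. ennreal (exp (f (x, \<phi>))) \<partial>Xn) \<le> ennreal (1 / sqrt (1 - l))"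
        using subg_sq[OF PX sg assms(3), of l] l by (simp add: f_def)
    qed
    also have "\<dots> = ennreal (exp c)" by (simp add: ec T'.emeasure_space_1)
    finally have Z: "(\<integral>\<^sup>+z. ennreal (exp (f z)) \<partial>Q) \<le> ennreal (exp c)" .
    have setsJQ: "sets J = sets Q" using setsJ setsQ by simp
    note dv0 = dv_bound[OF PQ PJ setsJQ mi_assm(1,2) fQ fpos Z]
    have miB: "(\<integral>z. ln (enn2real (RN_deriv Q J z)) \<partial>J) \<le> B" using mi_assm(3) unfolding MI .
    have dv: "(\<integral>\<^sup>+z. ennreal (f z) \<partial>J) \<le> ennreal (B + c)" "0 \<le> B + c"
    proof -
      show "(\<integral>\<^sup>+z. ennreal (f z) \<partial>J) \<le> ennreal (B + c)"
        using dv0 miB by (meson add_right_mono ennreal_leI order_trans)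
      show "0 \<le> B + c" using dv0 miB by linarith
    qed
    have k: "0 < 2 * \<sigma>\<^sup>2 / l" using l assms(3) by simp
    have "(\<integral>\<^sup>+ (x, \<phi>). ennreal ((\<phi> x - (\<integral>x'. \<phi> x' \<partial>Xn))\<^sup>2) \<partial>J)
        = (\<integral>\<^sup>+z. ennreal (2 * \<sigma>\<^sup>2 / l) * ennreal (f z) \<partial>J)"
    proof (rule nn_integral_cong)
      fix z :: "(nat \<Rightarrow> 'a) \<times> ((nat \<Rightarrow> 'a) \<Rightarrow> real)"
      have eq: "(snd z (fst z) - m (snd z))\<^sup>2 = 2 * \<sigma>\<^sup>2 / l * f z"
        using l assms(3) by (simp add: f_def)
      have e1: "ennreal (2 * \<sigma>\<^sup>2 / l) * ennreal (f z) = ennreal ((snd z (fst z) - m (snd z))\<^sup>2)"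
        using eq ennreal_mult'[of "2 * \<sigma>\<^sup>2 / l" "f z"] k by (metis less_imp_le)
      have e2: "(case z of (x, \<phi>) \<Rightarrow> ennreal ((\<phi> x - (\<integral>x'. \<phi> x' \<partial>Xn))\<^sup>2)) = ennreal ((snd z (fst z) - m (snd z))\<^sup>2)"
        by (cases z) (simp add: m_def)
      show "(case z of (x, \<phi>) \<Rightarrow> ennreal ((\<phi> x - (\<integral>x'. \<phi> x' \<partial>Xn))\<^sup>2)) = ennreal (2 * \<sigma>\<^sup>2 / l) * ennreal (f z)"
        by (rule trans[OF e2 e1[symmetric]])
    qed
    also have "\<dots> = ennreal (2 * \<sigma>\<^sup>2 / l) * (\<integral>\<^sup>+z. ennreal (f z) \<partial>J)"
      by (rule nn_integral_cmult) (simp add: measurable_cong_sets[OF setsJ refl] measurable_compose[OF fm measurable_ennreal])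
    also have "\<dots> \<le> ennreal (2 * \<sigma>\<^sup>2 / l) * ennreal (B + c)"
      by (intro mult_left_mono dv) simp
    also have "\<dots> = ennreal (\<sigma>\<^sup>2 * ((2 * B - ln (1 - l)) / l))"
    proof -
      have "2 * \<sigma>\<^sup>2 / l * (B + c) = \<sigma>\<^sup>2 * ((2 * B - ln (1 - l)) / l)"
        using l by (simp add: c_def field_simps)
      then show ?thesis using ennreal_mult'[of "2 * \<sigma>\<^sup>2 / l" "B + c"] k by (metis less_imp_le)
    qed
    finally show ?thesis using dv(2) l by (simp add: c_def field_simps)
  qed
  let ?L = "(\<integral>\<^sup>+ (x, \<phi>). ennreal ((\<phi> x - (\<integral>x'. \<phi> x' \<partial>Xn))\<^sup>2) \<partial>J)"
  have "?L \<noteq> \<infinity>" using bound[of "1/2"] by (auto simp: top_unique)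
  then obtain r where r: "?L = ennreal r" "0 \<le> r" by (cases ?L) auto
  have "r / \<sigma>\<^sup>2 \<le> (INF l\<in>{0<..<1::real}. (2 * B - ln (1 - l)) / l)"
  proof (rule cINF_greatest)
    show "{0<..<1::real} \<noteq> {}" by (auto intro: exI[of _ "1/2"])
    fix l :: real assume l: "l \<in> {0<..<1}"
    then have b: "ennreal r \<le> ennreal (\<sigma>\<^sup>2 * ((2 * B - ln (1 - l)) / l))" "0 \<le> \<sigma>\<^sup>2 * ((2 * B - ln (1 - l)) / l)"
    proof -
      have "0 \<le> (2 * B - ln (1 - l)) / l" using bound[of l] l by auto
      then show "0 \<le> \<sigma>\<^sup>2 * ((2 * B - ln (1 - l)) / l)" by (rule mult_nonneg_nonneg[OF zero_le_power2])
      show "ennreal r \<le> ennreal (\<sigma>\<^sup>2 * ((2 * B - ln (1 - l)) / l))" using bound[of l] l r(1) by simp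
    qed
    then have "r \<le> \<sigma>\<^sup>2 * ((2 * B - ln (1 - l)) / l)" using ennreal_le_iff[OF b(2)] by blast
    then show "r / \<sigma>\<^sup>2 \<le> (2 * B - ln (1 - l)) / l" using assms(3) by (simp add: field_simps)
  qed
  then have "r \<le> \<sigma>\<^sup>2 * (INF l\<in>{0<..<1::real}. (2 * B - ln (1 - l)) / l)"
    using assms(3) by (simp add: field_simps)
  then show ?thesis unfolding J_def[symmetric] using r by (simp add: ennreal_leI)
qed

end
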